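(* Let $p_n=\log(n^4)/n$ and assume $n$ is large enough that $0\le p_n\le 1/\sqrt2$. Then $$\mathcal{I}_0\le\exp\!\Big(p_n^2\big(\phi_{\max}/\phi_{\min}-1\big)^2\Big).$$
   Context: Fix a prompt $x$, a countable response space, full-support conditional distributions $\pi_{\mathrm{target}},\pi_{\mathrm{gen}}$, a reward $r$, $\beta>0$. Let $\phi_\beta(y|x)=\frac{\pi_{\mathrm{target}}(y|x)}{\pi_{\mathrm{gen}}(y|x)}e^{\beta r(y|x)}$, $\phi_{\max}=\max_{x,y}\phi_\beta(y|x)$, $\phi_{\min}=\min_{x,y}\phi_\beta(y|x)$, and $\Phi_\beta(s)=\mathbb{E}_{Y\sim\pi_{\mathrm{gen}}(\cdot|x)}[e^{-s\phi_\beta(Y|x)}]$ for $s\ge0$. Let $\mathcal{R}_0=\{(s_1,s_2)\in[0,\infty)^2:\min\{\Phi_\beta(s_1),\Phi_\beta(s_2)\}\ge1-p_n\}$ and $$\mathcal{I}_0=\frac{1}{1-e^{-n}}\int_{\mathcal{R}_0}\big(n^2\Phi_\beta(s_1)\Phi_\beta(s_2)+n\big)\big(-\Phi_\beta'(0)\big)\big(-\Phi_\beta'(s_1+s_2)\big)\exp\big(n[\Phi_\beta(s_1)\Phi_\beta(s_2)-1]\big)\,ds_1\,ds_2.$$ *)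

theory Defs
  imports "HOL-Analysis.Analysis"
begin

definition phi_beta ::
  "('x \<Rightarrow> 'y \<Rightarrow> real) \<Rightarrow> ('x \<Rightarrow> 'y \<Rightarrow> real) \<Rightarrow> ('x \<Rightarrow> 'y \<Rightarrow> real) \<Rightarrow> real \<Rightarrow> 'x \<Rightarrow> 'y \<Rightarrow> real"
  where "phi_beta pt pg r \<beta> x y = pt x y / pg x y * exp (\<beta> * r x y)"

definition Phi_beta ::
  "('x \<Rightarrow> 'y \<Rightarrow> real) \<Rightarrow> ('x \<Rightarrow> 'y \<Rightarrow> real) \<Rightarrow> 'x \<Rightarrow> real \<Rightarrow> real"
  where "Phi_beta pg \<phi> x s = (\<Sum>\<^sub>\<infinity>y. pg x y * exp (- s * \<phi> x y))"

definition R0 :: "(real \<Rightarrow> real) \<Rightarrow> real \<Rightarrow> (real \<times> real) set"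
  where "R0 \<Phi> p = {(s1, s2). 0 \<le> s1 \<and> 0 \<le> s2 \<and> min (\<Phi> s1) (\<Phi> s2) \<ge> 1 - p}"

definition I0 :: "(real \<Rightarrow> real) \<Rightarrow> nat \<Rightarrow> real \<Rightarrow> real"
  where "I0 \<Phi> n p = 1 / (1 - exp (- real n)) *
     (LINT z : R0 \<Phi> p | lborel.
        (real n ^ 2 * \<Phi> (fst z) * \<Phi> (snd z) + real n) * (- deriv \<Phi> 0)
        * (- deriv \<Phi> (fst z + snd z))
        * exp (real n * (\<Phi> (fst z) * \<Phi> (snd z) - 1)))"

end

theory Submission
  imports Defs "HOL-Probability.Hoeffding"
begin

lemma sum_bdd:
  fixes w g :: "'y \<Rightarrow> real"
  assumes ws: "w summable_on UNIV" and w0: "\<And>y. 0 \<le> w y" and gb: "\<And>y. \<bar>g y\<bar> \<le> C"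
  shows "(\<lambda>y. w y * g y) summable_on UNIV"
proof -
  have h: "(\<lambda>y. w y * C) summable_on UNIV" using ws by (rule summable_on_cmult_left)
  have "(\<lambda>y. norm (w y * g y)) summable_on UNIV"
  proof (rule summable_on_comparison_test[OF h])
    fix y
    have "norm (w y * g y) = w y * \<bar>g y\<bar>" using w0[of y] by (simp add: abs_mult)
    also have "\<dots> \<le> w y * C" by (rule mult_left_mono[OF gb w0])
    finally show "norm (w y * g y) \<le> w y * C" .
    show "0 \<le> norm (w y * g y)" by (rule norm_ge_zero)
  qed
  then show ?thesis by (rule summable_on_iff_abs_summable_on_real[THEN iffD2])
qed

lemma exp_taylor_bound:
  fixes x :: real assumes "\<bar>x\<bar> \<le> 1"
  shows "\<bar>exp (- x) - 1 + x\<bar> \<le> x\<^sup>2"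
proof -
  have l: "exp (-x) \<ge> 1 - x" using exp_ge_add_one_self[of "-x"] by simp
  have u: "exp (-x) \<le> 1 - x + x\<^sup>2"
  proof (cases "x \<le> 0")
    case True then show ?thesis using exp_bound[of "-x"] assms by simp
  next
    case False
    have "exp x \<ge> 1 + x" by (rule exp_ge_add_one_self)
    have "exp (-x) * exp x = 1" by (simp add: exp_minus)
    have "(1 - x + x\<^sup>2) * (1 + x) \<ge> 1" using False assms
      by (simp add: algebra_simps power2_eq_square power3_eq_cube)
    moreover have "exp (-x) * (1+x) \<le> exp (-x) * exp x"
      by (rule mult_left_mono) (use \<open>exp x \<ge> 1 + x\<close> in auto)
    ultimately have "exp(-x) * (1+x) \<le> (1 - x + x\<^sup>2) * (1 + x)"
      using \<open>exp (-x) * exp x = 1\<close> by linarith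
    then show ?thesis using False assms by (simp add: mult_le_cancel_right_pos)
  qed
  show ?thesis unfolding abs_le_iff using l u by linarith
qed



lemma exp_sf_bound:
  fixes s t B :: real assumes "0 \<le> t" "t \<le> B"
  shows "\<bar>exp (- s * t)\<bar> \<le> exp (\<bar>s\<bar> * B)"
proof -
  have "- s * t \<le> \<bar>s\<bar> * B"
    by (smt (verit, best) assms abs_ge_self abs_mult_pos minus_mult_left mult_mono abs_ge_zero)
  then show ?thesis by simp
qed

lemma Psi_summable:
  fixes w f :: "'y \<Rightarrow> real"
  assumes ws: "w summable_on UNIV" and w0: "\<And>y. 0 \<le> w y"
    and f0: "\<And>y. 0 \<le> f y" and fB: "\<And>y. f y \<le> B"
  shows "(\<lambda>y. w y * exp (- s * f y)) summable_on UNIV"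
  by (rule sum_bdd[OF ws w0]) (use exp_sf_bound f0 fB in blast)

lemma Psi_bound_sum:
  fixes w g :: "'y \<Rightarrow> real"
  assumes ws: "w summable_on UNIV" and w0: "\<And>y. 0 \<le> w y" and gb: "\<And>y. \<bar>g y\<bar> \<le> C"
  shows "\<bar>\<Sum>\<^sub>\<infinity>y. w y * g y\<bar> \<le> C * (\<Sum>\<^sub>\<infinity>y. w y)"
proof -
  have s1: "(\<lambda>y. w y * g y) summable_on UNIV" by (rule sum_bdd[OF ws w0 gb])
  have s2: "(\<lambda>y. w y * C) summable_on UNIV" using ws by (rule summable_on_cmult_left)
  have s3: "(\<lambda>y. - (w y * g y)) summable_on UNIV" using s1 by (simp add: summable_on_uminus)
  have "(\<Sum>\<^sub>\<infinity>y. w y * g y) \<le> (\<Sum>\<^sub>\<infinity>y. w y * C)"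
    by (rule infsum_mono[OF s1 s2]) (metis abs_le_D1 gb mult_left_mono w0)
  moreover have "(\<Sum>\<^sub>\<infinity>y. - (w y * g y)) \<le> (\<Sum>\<^sub>\<infinity>y. w y * C)"
    by (rule infsum_mono[OF s3 s2]) (metis abs_le_D2 gb mult_left_mono w0 mult_minus_right)
  moreover have "(\<Sum>\<^sub>\<infinity>y. w y * C) = C * (\<Sum>\<^sub>\<infinity>y. w y)"
    using infsum_cmult_left[of C w UNIV] ws by (simp add: mult.commute)
  moreover have "(\<Sum>\<^sub>\<infinity>y. - (w y * g y)) = - (\<Sum>\<^sub>\<infinity>y. w y * g y)"
    by (rule infsum_uminus)
  ultimately show ?thesis by linarith
qed

lemma Psi_deriv:
  fixes w f :: "'y \<Rightarrow> real"
  assumes ws: "w summable_on UNIV" and w0: "\<And>y. 0 \<le> w y"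
    and f0: "\<And>y. 0 \<le> f y" and fB: "\<And>y. f y \<le> B"
  shows "((\<lambda>s. \<Sum>\<^sub>\<infinity>y. w y * exp (- s * f y)) has_field_derivative
           - (\<Sum>\<^sub>\<infinity>y. w y * (f y * exp (- s * f y)))) (at s)"
proof -
  define Psi where "Psi = (\<lambda>s. \<Sum>\<^sub>\<infinity>y. w y * exp (- s * f y))"
  define P where "P = (\<Sum>\<^sub>\<infinity>y. w y * (f y * exp (- s * f y)))"
  define W where "W = (\<Sum>\<^sub>\<infinity>y. w y)"
  have B0: "0 \<le> B" using f0 fB order_trans by blast
  define K where "K = B\<^sup>2 * exp (\<bar>s\<bar> * B) * W"
  have sP: "(\<lambda>y. w y * (f y * exp (- s * f y))) summable_on UNIV"
  proof (rule sum_bdd[OF ws w0])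
    fix y show "\<bar>f y * exp (- s * f y)\<bar> \<le> B * exp (\<bar>s\<bar> * B)"
      unfolding abs_mult using exp_sf_bound[OF f0 fB, of s] f0[of y] fB[of y]
      by (intro mult_mono) auto
  qed
  have key: "\<bar>(Psi t - Psi s) / (t - s) + P\<bar> \<le> K * \<bar>t - s\<bar>"
    if t: "t \<noteq> s" "\<bar>t - s\<bar> * B \<le> 1" for t
  proof -
    define h where "h = t - s"
    have h0: "h \<noteq> 0" using t h_def by simp
    have "Psi t + (- Psi s + h * P) =
       (\<Sum>\<^sub>\<infinity>y. w y * exp (- t * f y) + (- (w y * exp (- s * f y)) + h * (w y * (f y * exp (- s * f y)))))"
    proof -
      have a: "(\<lambda>y. w y * exp (- t * f y)) summable_on UNIV" by (rule Psi_summable[OF ws w0 f0 fB])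
      have b: "(\<lambda>y. - (w y * exp (- s * f y))) summable_on UNIV"
        unfolding summable_on_uminus by (rule Psi_summable[OF ws w0 f0 fB])
      have c: "(\<lambda>y. h * (w y * (f y * exp (- s * f y)))) summable_on UNIV"
        using sP by (rule summable_on_cmult_right)
      show ?thesis
        unfolding Psi_def P_def infsum_add[OF a summable_on_add[OF b c]] infsum_add[OF b c]
              infsum_uminus infsum_cmult_right[OF sP] by (rule refl)
    qed
    also have "\<dots> = (\<Sum>\<^sub>\<infinity>y. w y * (exp (- s * f y) * (exp (- (h * f y)) - 1 + h * f y)))"
      by (rule infsum_cong) (simp add: h_def algebra_simps flip: exp_add)
    finally have eq: "Psi t - Psi s + h * P =
        (\<Sum>\<^sub>\<infinity>y. w y * (exp (- s * f y) * (exp (- (h * f y)) - 1 + h * f y)))" by simp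
    have "\<bar>Psi t - Psi s + h * P\<bar> \<le> (exp (\<bar>s\<bar> * B) * (h\<^sup>2 * B\<^sup>2)) * W"
      unfolding eq W_def
    proof (rule Psi_bound_sum[OF ws w0])
      fix y
      have hf: "\<bar>h * f y\<bar> \<le> 1"
        using t(2) f0[of y] fB[of y] unfolding h_def abs_mult
        by (smt (verit, best) abs_ge_zero mult_left_mono)
      have "\<bar>exp (- (h * f y)) - 1 + h * f y\<bar> \<le> (h * f y)\<^sup>2" by (rule exp_taylor_bound[OF hf])
      also have "\<dots> \<le> h\<^sup>2 * B\<^sup>2"
        unfolding power_mult_distrib using f0[of y] fB[of y]
        by (intro mult_left_mono power_mono) auto
      finally have "\<bar>exp (- (h * f y)) - 1 + h * f y\<bar> \<le> h\<^sup>2 * B\<^sup>2" .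
      then show "\<bar>exp (- s * f y) * (exp (- (h * f y)) - 1 + h * f y)\<bar> \<le> exp (\<bar>s\<bar> * B) * (h\<^sup>2 * B\<^sup>2)"
        unfolding abs_mult using exp_sf_bound[OF f0 fB, of s y]
        by (intro mult_mono) auto
    qed
    then have "\<bar>Psi t - Psi s + h * P\<bar> \<le> K * \<bar>h\<bar> * \<bar>h\<bar>"
      by (simp add: K_def power2_eq_square algebra_simps)
    moreover have "(Psi t - Psi s) / (t - s) + P = (Psi t - Psi s + h * P) / h"
      using h0 by (simp add: h_def field_simps)
    ultimately show ?thesis
      using h0 by (simp add: abs_divide divide_le_eq h_def mult.assoc)
  qed
  have "((\<lambda>t. (Psi t - Psi s) / (t - s) + P) \<longlongrightarrow> 0) (at s)"
  proof (rule Lim_null_comparison)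
    show "\<forall>\<^sub>F t in at s. norm ((Psi t - Psi s) / (t - s) + P) \<le> K * \<bar>t - s\<bar>"
    proof -
      have d0: "0 < 1 / (B + 1)" using B0 by simp
      have "\<forall>t. t \<noteq> s \<and> dist t s < 1 / (B + 1) \<longrightarrow> norm ((Psi t - Psi s) / (t - s) + P) \<le> K * \<bar>t - s\<bar>"
      proof (intro allI impI)
        fix t assume "t \<noteq> s \<and> dist t s < 1 / (B + 1)"
        then have ts: "t \<noteq> s" "\<bar>t - s\<bar> < 1 / (B + 1)" by (auto simp: dist_real_def)
        have "\<bar>t - s\<bar> * B \<le> \<bar>t - s\<bar> * (B + 1)" by (simp add: mult_left_mono)
        also have "\<dots> \<le> 1" using ts(2) B0 by (simp add: less_divide_eq)
        finally show "norm ((Psi t - Psi s) / (t - s) + P) \<le> K * \<bar>t - s\<bar>"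
          using key[OF ts(1)] by simp
      qed
      then show ?thesis unfolding eventually_at using d0 by blast
    qed
    show "((\<lambda>t. K * \<bar>t - s\<bar>) \<longlongrightarrow> 0) (at s)"
      by (rule tendsto_eq_intros refl | simp)+
  qed
  then have "((\<lambda>t. (Psi t - Psi s) / (t - s)) \<longlongrightarrow> - P) (at s)"
    using tendsto_add[OF _ tendsto_const[of "- P"]] by fastforce
  then show ?thesis
    unfolding has_field_derivative_iff Psi_def P_def by simp
qed



lemma cosh_sq_bound:
  fixes y :: real assumes "0 \<le> y"
  shows "(1 + exp y)\<^sup>2 / (4 * exp y) \<le> exp (y\<^sup>2 / 4)"
proof -
  have h1: "- y * (1/2) + ln (1 + (1/2) * (exp y - 1)) \<le> y\<^sup>2 / 8"
    using Hoeffdings_lemma_aux[of y "1/2"] assms by simp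
  have e: "1 + (1/2) * (exp y - 1) = (1 + exp y) / 2" by (simp add: field_simps)
  have "ln ((1 + exp y) / 2) \<le> y / 2 + y\<^sup>2 / 8" using h1 unfolding e by linarith
  then have "(1 + exp y) / 2 \<le> exp (y / 2 + y\<^sup>2 / 8)"
    by (smt (verit) exp_gt_zero exp_le_cancel_iff exp_ln divide_pos_pos)
  then have "((1 + exp y) / 2)\<^sup>2 \<le> (exp (y / 2 + y\<^sup>2 / 8))\<^sup>2"
    by (intro power_mono; simp)
  also have "\<dots> = exp y * exp (y\<^sup>2 / 4)"
  proof -
    have "(exp (y / 2 + y\<^sup>2 / 8))\<^sup>2 = exp (2 * (y / 2 + y\<^sup>2 / 8))"
      by (simp add: power2_eq_square flip: exp_add)
    also have "2 * (y / 2 + y\<^sup>2 / 8) = y + y\<^sup>2 / 4" by simp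
    finally show ?thesis by (simp add: exp_add)
  qed
  finally show ?thesis by (simp add: field_simps power2_eq_square)
qed

lemma kant:
  fixes v X :: "'y \<Rightarrow> real"
  assumes vs: "v summable_on UNIV" and v0: "\<And>y. 0 \<le> v y"
    and m0: "0 < m" and Xb: "\<And>y. m \<le> X y \<and> X y \<le> M"
  shows "(\<Sum>\<^sub>\<infinity>y. v y) * (\<Sum>\<^sub>\<infinity>y. v y * (X y)\<^sup>2) \<le> (m + M)\<^sup>2 / (4 * m * M) * (\<Sum>\<^sub>\<infinity>y. v y * X y)\<^sup>2"
proof -
  define A where "A = (\<Sum>\<^sub>\<infinity>y. v y)"
  define S1 where "S1 = (\<Sum>\<^sub>\<infinity>y. v y * X y)"
  define S2 where "S2 = (\<Sum>\<^sub>\<infinity>y. v y * (X y)\<^sup>2)"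
  have M0: "0 < M" using Xb[of undefined] m0 by linarith
  have s1: "(\<lambda>y. v y * X y) summable_on UNIV"
    by (rule sum_bdd[OF vs v0, of _ M]) (use Xb m0 in \<open>smt (verit)\<close>)
  have s2: "(\<lambda>y. v y * (X y)\<^sup>2) summable_on UNIV"
  proof (rule sum_bdd[OF vs v0, of _ "M\<^sup>2"])
    fix y show "\<bar>(X y)\<^sup>2\<bar> \<le> M\<^sup>2" using Xb[of y] m0
      by (simp add: abs_le_iff power_mono)
  qed
  have s3: "(\<lambda>y. (m + M) * (v y * X y) + (- (m * M)) * v y) summable_on UNIV"
    by (intro summable_on_add summable_on_cmult_right s1 vs)
  have "S2 \<le> (\<Sum>\<^sub>\<infinity>y. (m + M) * (v y * X y) + (- (m * M)) * v y)"
    unfolding S2_def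
  proof (rule infsum_mono[OF s2 s3])
    fix y
    have "0 \<le> (X y - m) * (M - X y)" using Xb[of y] by simp
    then have "(X y)\<^sup>2 \<le> (m + M) * X y - m * M" by (simp add: algebra_simps power2_eq_square)
    then have "v y * (X y)\<^sup>2 \<le> v y * ((m + M) * X y - m * M)" by (rule mult_left_mono[OF _ v0])
    moreover have "v y * ((m + M) * X y - m * M) = (m + M) * (v y * X y) + - (m * M) * v y"
      by (simp add: algebra_simps)
    ultimately show "v y * (X y)\<^sup>2 \<le> (m + M) * (v y * X y) + - (m * M) * v y" by linarith
  qed
  also have "\<dots> = (m + M) * S1 - m * M * A"
    unfolding S1_def A_def
    unfolding infsum_add[OF summable_on_cmult_right[OF s1] summable_on_cmult_right[OF vs]]
         infsum_cmult_right[OF s1] infsum_cmult_right[OF vs] by simp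
  finally have le: "S2 \<le> (m + M) * S1 - m * M * A" .
  have A0: "0 \<le> A" unfolding A_def by (rule infsum_nonneg) (rule v0)
  have "A * S2 \<le> A * ((m + M) * S1 - m * M * A)" by (rule mult_left_mono[OF le A0])
  also have "\<dots> \<le> (m + M)\<^sup>2 / (4 * m * M) * S1\<^sup>2"
  proof -
    have "(m + M)\<^sup>2 * S1\<^sup>2 - 4 * m * M * (A * ((m + M) * S1 - m * M * A)) = ((m + M) * S1 - 2 * m * M * A)\<^sup>2"
      by (simp add: power2_eq_square algebra_simps)
    then have "4 * m * M * (A * ((m + M) * S1 - m * M * A)) \<le> (m + M)\<^sup>2 * S1\<^sup>2"
      by (smt (verit) zero_le_power2)
    then show ?thesis using m0 M0 by (simp add: field_simps)
  qed
  finally show ?thesis unfolding A_def S1_def S2_def .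
qed



lemma exp_range:
  fixes s a b t :: real assumes "0 \<le> s" "a \<le> t" "t \<le> b"
  shows "exp (- s * b) \<le> exp (- s * t) \<and> exp (- s * t) \<le> exp (- s * a)"
  using assms by (simp add: mult_left_mono)

lemma key_ineq:
  fixes v f :: "'y \<Rightarrow> real"
  assumes vs: "v summable_on UNIV" and v0: "\<And>y. 0 \<le> v y" and a0: "0 < a"
    and fb: "\<And>y. a \<le> f y \<and> f y \<le> b"
    and s1: "0 \<le> s1" and s2: "0 \<le> s2"
    and K1: "(exp (- s1 * b) + exp (- s1 * a))\<^sup>2 / (4 * exp (- s1 * b) * exp (- s1 * a)) \<le> C"
    and K2: "(exp (- s2 * b) + exp (- s2 * a))\<^sup>2 / (4 * exp (- s2 * b) * exp (- s2 * a)) \<le> C"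
    and D1: "0 < (\<Sum>\<^sub>\<infinity>y. v y * exp (- s1 * f y))"
    and D2: "0 < (\<Sum>\<^sub>\<infinity>y. v y * exp (- s2 * f y))"
  shows "(\<Sum>\<^sub>\<infinity>y. v y) * (\<Sum>\<^sub>\<infinity>y. v y * exp (- (s1 + s2) * f y))
          \<le> C * (\<Sum>\<^sub>\<infinity>y. v y * exp (- s1 * f y)) * (\<Sum>\<^sub>\<infinity>y. v y * exp (- s2 * f y))"
proof -
  define X where "X = (\<lambda>y. exp (- s1 * f y))"
  define Y where "Y = (\<lambda>y. exp (- s2 * f y))"
  define A where "A = (\<Sum>\<^sub>\<infinity>y. v y)"
  define d1 where "d1 = (\<Sum>\<^sub>\<infinity>y. v y * X y)"
  define d2 where "d2 = (\<Sum>\<^sub>\<infinity>y. v y * Y y)"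
  define Q1 where "Q1 = (\<Sum>\<^sub>\<infinity>y. v y * (X y)\<^sup>2)"
  define Q2 where "Q2 = (\<Sum>\<^sub>\<infinity>y. v y * (Y y)\<^sup>2)"
  define Z where "Z = (\<Sum>\<^sub>\<infinity>y. v y * (X y * Y y))"
  have d1p: "0 < d1" using D1 by (simp add: d1_def X_def)
  have d2p: "0 < d2" using D2 by (simp add: d2_def Y_def)
  have Xb: "exp (- s1 * b) \<le> X y \<and> X y \<le> exp (- s1 * a)" for y
    unfolding X_def by (rule exp_range[OF s1]) (use fb in auto)
  have Yb: "exp (- s2 * b) \<le> Y y \<and> Y y \<le> exp (- s2 * a)" for y
    unfolding Y_def by (rule exp_range[OF s2]) (use fb in auto)
  have X1: "\<bar>X y\<bar> \<le> 1" for y unfolding X_def using s1 fb[of y] a0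
    by (simp add: mult_nonneg_nonneg)
  have Y1: "\<bar>Y y\<bar> \<le> 1" for y unfolding Y_def using s2 fb[of y] a0
    by (simp add: mult_nonneg_nonneg)
  have kA: "A * Q1 \<le> (exp (- s1 * b) + exp (- s1 * a))\<^sup>2 / (4 * exp (- s1 * b) * exp (- s1 * a)) * d1\<^sup>2"
    unfolding A_def Q1_def d1_def by (rule kant[OF vs v0 _ Xb]) simp
  have kB: "A * Q2 \<le> (exp (- s2 * b) + exp (- s2 * a))\<^sup>2 / (4 * exp (- s2 * b) * exp (- s2 * a)) * d2\<^sup>2"
    unfolding A_def Q2_def d2_def by (rule kant[OF vs v0 _ Yb]) simp
  have kA': "A * Q1 \<le> C * d1\<^sup>2"
    using kA K1 by (smt (verit) mult_right_mono zero_le_power2)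
  have kB': "A * Q2 \<le> C * d2\<^sup>2"
    using kB K2 by (smt (verit) mult_right_mono zero_le_power2)
  have sZ: "(\<lambda>y. v y * (X y * Y y)) summable_on UNIV"
    by (rule sum_bdd[OF vs v0, of _ 1]) (simp add: abs_mult X1 Y1 mult_le_one)
  have sQ1: "(\<lambda>y. v y * (X y)\<^sup>2) summable_on UNIV"
    by (rule sum_bdd[OF vs v0, of _ 1]) (simp add: X1 power_le_one abs_square_le_1)
  have sQ2: "(\<lambda>y. v y * (Y y)\<^sup>2) summable_on UNIV"
    by (rule sum_bdd[OF vs v0, of _ 1]) (simp add: Y1 power_le_one abs_square_le_1)
  have "(\<Sum>\<^sub>\<infinity>y. (2 * d1 * d2) * (v y * (X y * Y y)))
        \<le> (\<Sum>\<^sub>\<infinity>y. d2\<^sup>2 * (v y * (X y)\<^sup>2) + d1\<^sup>2 * (v y * (Y y)\<^sup>2))"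
  proof (rule infsum_mono)
    show "(\<lambda>y. (2 * d1 * d2) * (v y * (X y * Y y))) summable_on UNIV"
      by (rule summable_on_cmult_right[OF sZ])
    show "(\<lambda>y. d2\<^sup>2 * (v y * (X y)\<^sup>2) + d1\<^sup>2 * (v y * (Y y)\<^sup>2)) summable_on UNIV"
      by (intro summable_on_add summable_on_cmult_right sQ1 sQ2)
    fix y
    have "2 * d1 * d2 * (X y * Y y) \<le> d2\<^sup>2 * (X y)\<^sup>2 + d1\<^sup>2 * (Y y)\<^sup>2"
    proof -
      have "0 \<le> (d2 * X y - d1 * Y y)\<^sup>2" by simp
      then show ?thesis by (simp add: power2_eq_square algebra_simps)
    qed
    then have "v y * (2 * d1 * d2 * (X y * Y y)) \<le> v y * (d2\<^sup>2 * (X y)\<^sup>2 + d1\<^sup>2 * (Y y)\<^sup>2)"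
      by (rule mult_left_mono[OF _ v0])
    then show "(2 * d1 * d2) * (v y * (X y * Y y)) \<le> d2\<^sup>2 * (v y * (X y)\<^sup>2) + d1\<^sup>2 * (v y * (Y y)\<^sup>2)"
      by (simp add: algebra_simps)
  qed
  then have main: "2 * d1 * d2 * Z \<le> d2\<^sup>2 * Q1 + d1\<^sup>2 * Q2"
    unfolding Z_def Q1_def Q2_def
    infsum_add[OF summable_on_cmult_right[OF sQ1] summable_on_cmult_right[OF sQ2]]
    infsum_cmult_right[OF sQ1] infsum_cmult_right[OF sQ2] infsum_cmult_right[OF sZ] .
  have A0: "0 \<le> A" unfolding A_def by (rule infsum_nonneg) (rule v0)
  have "A * (2 * d1 * d2 * Z) \<le> A * (d2\<^sup>2 * Q1 + d1\<^sup>2 * Q2)" by (rule mult_left_mono[OF main A0])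
  also have "\<dots> = d2\<^sup>2 * (A * Q1) + d1\<^sup>2 * (A * Q2)" by (simp add: algebra_simps)
  also have "\<dots> \<le> d2\<^sup>2 * (C * d1\<^sup>2) + d1\<^sup>2 * (C * d2\<^sup>2)"
    by (intro add_mono mult_left_mono kA' kB') auto
  finally have "(2 * d1 * d2) * (A * Z) \<le> (2 * d1 * d2) * (C * d1 * d2)"
    by (simp add: power2_eq_square algebra_simps)
  then have AZ: "A * Z \<le> C * d1 * d2" using d1p d2p by (simp add: mult_le_cancel_left_pos)
  have "(\<Sum>\<^sub>\<infinity>y. v y * exp (- (s1 + s2) * f y)) = Z"
    unfolding Z_def X_def Y_def by (rule infsum_cong) (simp add: algebra_simps flip: exp_add)
  then show ?thesis using AZ by (simp add: A_def d1_def d2_def X_def Y_def)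
qed


lemma integral_bound:
  fixes Phi D :: "real \<Rightarrow> real" and n :: nat and T :: real
  assumes T0: "0 \<le> T"
    and dPhi: "\<And>s. (Phi has_real_derivative - D s) (at s)"
    and contD: "continuous_on UNIV D"
    and Phi_pos: "\<And>s. 0 \<le> s \<Longrightarrow> 0 < Phi s"
    and Phi0: "Phi 0 = 1"
    and D0: "\<And>s. 0 \<le> s \<Longrightarrow> 0 \<le> D s"
  defines "H \<equiv> (\<lambda>z. (real n ^ 2 * Phi (fst z) * Phi (snd z) + real n) * D (fst z) * D (snd z)
                  * exp (real n * (Phi (fst z) * Phi (snd z) - 1)))"
  shows "integrable lborel (\<lambda>z. indicator (cbox (0,0) (T,T)) z *\<^sub>R H z)"
    and "(\<integral>z. indicator (cbox (0,0) (T,T)) z *\<^sub>R H z \<partial>lborel) \<le> 1 - exp (- real n)"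
proof -
  define Box :: "(real \<times> real) set" where "Box = cbox (0,0) (T,T)"
  have contPhi: "continuous_on UNIV Phi"
    using dPhi by (meson DERIV_isCont continuous_at_imp_continuous_on)
  have dPhi': "(Phi has_real_derivative - D s) (at s within S)" for s S
    using dPhi has_field_derivative_at_within by blast
  have contH: "continuous_on Box H"
    unfolding H_def
    by (intro continuous_intros continuous_on_compose2[OF contPhi] continuous_on_compose2[OF contD]) auto
  show int: "integrable lborel (\<lambda>z. indicator (cbox (0,0) (T,T)) z *\<^sub>R H z)"
    using borel_integrable_compact[OF _ contH] unfolding Box_def by auto
  define g where "g = (\<lambda>u::real. real n * u * exp (real n * (u - 1)))"
  define inner where "inner = (\<lambda>x. \<integral>y. indicator Box (x, y) *\<^sub>R H (x, y) \<partial>lborel)"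
  have inner_le: "inner x \<le> indicator {0..T} x *\<^sub>R (D x * real n * exp (real n * (Phi x - 1)))" for x
  proof (cases "x \<in> {0..T}")
    case False
    then have "indicator Box (x, y) = (0::real)" for y
      by (auto simp add: Box_def cbox_Pair_eq indicator_def)
    then show ?thesis using False by (simp add: inner_def)
  next
    case True
    then have x0: "0 \<le> x" "x \<le> T" by auto
    have px: "0 < Phi x" by (rule Phi_pos[OF x0(1)])
    have ind: "indicator Box (x, y) = (indicator {0..T} y :: real)" for y
      using True by (simp add: Box_def cbox_Pair_eq indicator_def)
    define F where "F = (\<lambda>y. - (D x / Phi x) * g (Phi x * Phi y))"
    have "(\<integral>y. indicator {0..T} y *\<^sub>R H (x, y) \<partial>lborel) = F T - F 0"
    proof (rule integral_FTC_atLeastAtMost[OF T0])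
      fix y assume "0 \<le> y" "y \<le> T"
      have "(F has_real_derivative H (x, y)) (at y within {0..T})"
        unfolding F_def g_def H_def
        apply (rule derivative_eq_intros dPhi' refl | simp)+
        using px by (simp add: field_simps power2_eq_square)
      then show "(F has_vector_derivative H (x, y)) (at y within {0..T})"
        by (simp add: has_real_derivative_iff_has_vector_derivative)
    next
      show "continuous_on {0..T} (\<lambda>y. H (x, y))"
        unfolding H_def
        by (intro continuous_intros continuous_on_compose2[OF contPhi] continuous_on_compose2[OF contD]) auto
    qed
    then have "inner x = F T - F 0" by (simp add: inner_def ind)
    also have "\<dots> = (D x / Phi x) * g (Phi x) - (D x / Phi x) * g (Phi x * Phi T)"
      by (simp add: F_def Phi0)
    also have "\<dots> \<le> (D x / Phi x) * g (Phi x)"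
    proof -
      have "0 \<le> g (Phi x * Phi T)" unfolding g_def
        using px Phi_pos[OF T0] by simp
      moreover have "0 \<le> D x / Phi x" using D0[OF x0(1)] px by simp
      ultimately have "0 \<le> (D x / Phi x) * g (Phi x * Phi T)" by (simp only: mult_nonneg_nonneg)
      then show ?thesis by linarith
    qed
    also have "\<dots> = indicator {0..T} x *\<^sub>R (D x * real n * exp (real n * (Phi x - 1)))"
      using True px by (simp add: g_def)
    finally show ?thesis .
  qed
  have "(\<integral>z. indicator Box z *\<^sub>R H z \<partial>lborel) = (\<integral>z. indicator Box z *\<^sub>R H z \<partial>(lborel \<Otimes>\<^sub>M lborel))"
    by (simp add: lborel_prod)
  also have "\<dots> = (\<integral>x. inner x \<partial>lborel)"
    unfolding inner_def
    by (rule lborel_pair.integral_fst'[symmetric]) (use int in \<open>simp add: lborel_prod Box_def\<close>)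
  also have "\<dots> \<le> (\<integral>x. indicator {0..T} x *\<^sub>R (D x * real n * exp (real n * (Phi x - 1))) \<partial>lborel)"
  proof (rule integral_mono)
    show "integrable lborel inner"
    proof -
      have "integrable (lborel \<Otimes>\<^sub>M lborel) (\<lambda>z. indicator Box z *\<^sub>R H z)"
        using int by (simp add: lborel_prod Box_def)
      from lborel_pair.integrable_fst'[OF this] show ?thesis unfolding inner_def by simp
    qed
    show "integrable lborel (\<lambda>x. indicator {0..T} x *\<^sub>R (D x * real n * exp (real n * (Phi x - 1))))"
    proof -
      have "continuous_on {0..T} (\<lambda>x. D x * real n * exp (real n * (Phi x - 1)))"
        by (intro continuous_intros continuous_on_compose2[OF contPhi] continuous_on_compose2[OF contD]) auto
      from borel_integrable_atLeastAtMost'[OF this] show ?thesis unfolding set_integrable_def .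
    qed
    show "inner x \<le> indicator {0..T} x *\<^sub>R (D x * real n * exp (real n * (Phi x - 1)))" for x
      by (rule inner_le)
  qed
  also have "\<dots> = (- exp (real n * (Phi T - 1))) - (- exp (real n * (Phi 0 - 1)))"
  proof (rule integral_FTC_atLeastAtMost[OF T0])
    fix x assume "0 \<le> x" "x \<le> T"
    have "((\<lambda>x. - exp (real n * (Phi x - 1))) has_real_derivative D x * real n * exp (real n * (Phi x - 1))) (at x within {0..T})"
      by (rule derivative_eq_intros dPhi' refl | simp)+
    then show "((\<lambda>x. - exp (real n * (Phi x - 1))) has_vector_derivative D x * real n * exp (real n * (Phi x - 1))) (at x within {0..T})"
      by (simp add: has_real_derivative_iff_has_vector_derivative)
  next
    show "continuous_on {0..T} (\<lambda>x. D x * real n * exp (real n * (Phi x - 1)))"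
      by (intro continuous_intros continuous_on_compose2[OF contPhi] continuous_on_compose2[OF contD]) auto
  qed
  also have "\<dots> \<le> 1 - exp (- real n)"
  proof -
    have "- real n \<le> real n * (Phi T - 1)" using Phi_pos[OF T0]
      by (simp add: algebra_simps)
    then have "exp (- real n) \<le> exp (real n * (Phi T - 1))" by simp
    then show ?thesis by (simp add: Phi0)
  qed
  finally show "(\<integral>z. indicator (cbox (0,0) (T,T)) z *\<^sub>R H z \<partial>lborel) \<le> 1 - exp (- real n)"
    unfolding Box_def .
qed


lemma infsum_bounds:
  fixes w g :: "'y \<Rightarrow> real"
  assumes ws: "w summable_on UNIV" and w0: "\<And>y. 0 \<le> w y" and gb: "\<And>y. lo \<le> g y \<and> g y \<le> hi"
  shows "lo * (\<Sum>\<^sub>\<infinity>y. w y) \<le> (\<Sum>\<^sub>\<infinity>y. w y * g y) \<and> (\<Sum>\<^sub>\<infinity>y. w y * g y) \<le> hi * (\<Sum>\<^sub>\<infinity>y. w y)"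
proof -
  have gbd: "\<bar>g y\<bar> \<le> \<bar>lo\<bar> + \<bar>hi\<bar>" for y
  proof -
    have "g y \<le> \<bar>lo\<bar> + \<bar>hi\<bar>" using gb[of y] abs_ge_self[of hi] abs_ge_zero[of lo] by linarith
    moreover have "- g y \<le> \<bar>lo\<bar> + \<bar>hi\<bar>" using gb[of y] abs_ge_minus_self[of lo] abs_ge_zero[of hi] by linarith
    ultimately show ?thesis by (simp only: abs_le_iff)
  qed
  have sg: "(\<lambda>y. w y * g y) summable_on UNIV" by (rule sum_bdd[OF ws w0 gbd])
  have sl: "(\<lambda>y. w y * lo) summable_on UNIV" by (rule summable_on_cmult_left[OF ws])
  have sh: "(\<lambda>y. w y * hi) summable_on UNIV" by (rule summable_on_cmult_left[OF ws])
  have l1: "w y * lo \<le> w y * g y" for y by (rule mult_left_mono) (use gb[of y] w0[of y] in auto)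
  have l2: "w y * g y \<le> w y * hi" for y by (rule mult_left_mono) (use gb[of y] w0[of y] in auto)
  have "(\<Sum>\<^sub>\<infinity>y. w y * lo) \<le> (\<Sum>\<^sub>\<infinity>y. w y * g y)" by (rule infsum_mono[OF sl sg l1])
  moreover have "(\<Sum>\<^sub>\<infinity>y. w y * g y) \<le> (\<Sum>\<^sub>\<infinity>y. w y * hi)" by (rule infsum_mono[OF sg sh l2])
  moreover have "(\<Sum>\<^sub>\<infinity>y. w y * lo) = (\<Sum>\<^sub>\<infinity>y. w y) * lo" by (rule infsum_cmult_left[OF ws])
  moreover have "(\<Sum>\<^sub>\<infinity>y. w y * hi) = (\<Sum>\<^sub>\<infinity>y. w y) * hi" by (rule infsum_cmult_left[OF ws])
  ultimately show ?thesis by (simp only: mult.commute)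
qed

lemma exp_neg2p:
  fixes p :: real assumes p0: "0 \<le> p" and p1: "p \<le> 1 / sqrt 2"
  shows "exp (- 2 * p) \<le> 1 - p"
proof -
  have "p\<^sup>2 \<le> (1 / sqrt 2)\<^sup>2" by (rule power_mono[OF p1 p0])
  then have pp: "p\<^sup>2 \<le> 1 / 2" by (simp add: power_divide)
  have e: "1 + 2 * p + (2 * p)\<^sup>2 / 2 \<le> exp (2 * p)"
    by (rule exp_lower_Taylor_quadratic) (use p0 in simp)
  have "1 \<le> (1 + 2 * p + (2 * p)\<^sup>2 / 2) * (1 - p)"
  proof -
    have "(1 + 2 * p + (2 * p)\<^sup>2 / 2) * (1 - p) = 1 + p * (1 - 2 * p\<^sup>2)"
      by (simp add: algebra_simps power2_eq_square)
    moreover have "0 \<le> p * (1 - 2 * p\<^sup>2)" using p0 pp by simp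
    ultimately show ?thesis by linarith
  qed
  also have "\<dots> \<le> exp (2 * p) * (1 - p)"
  proof (rule mult_right_mono[OF e])
    have "1 / sqrt 2 \<le> (1::real)" by (simp add: divide_le_eq)
    then have "p \<le> 1" using p1 by linarith
    then show "0 \<le> 1 - p" by simp
  qed
  finally have "1 \<le> exp (2 * p) * (1 - p)" .
  then have "exp (- 2 * p) * 1 \<le> exp (- 2 * p) * (exp (2 * p) * (1 - p))"
    by (rule mult_left_mono) simp
  also have "\<dots> = 1 - p" by (simp add: mult.assoc[symmetric] flip: exp_add)
  finally show ?thesis by simp
qed

lemma K_bound:
  fixes s m M p :: real
  assumes m0: "0 < m" and mM: "m \<le> M" and s0: "0 \<le> s" and sT: "s \<le> 2 * p / m"
  shows "(exp (- s * M) + exp (- s * m))\<^sup>2 / (4 * exp (- s * M) * exp (- s * m))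
          \<le> exp (p\<^sup>2 * (M / m - 1)\<^sup>2)"
proof -
  define y where "y = s * (M - m)"
  have y0: "0 \<le> y" using s0 mM by (simp add: y_def)
  have em: "exp (- s * m) = exp (- s * M) * exp y" by (simp add: y_def algebra_simps flip: exp_add)
  have "(exp (- s * M) + exp (- s * m))\<^sup>2 / (4 * exp (- s * M) * exp (- s * m))
        = (1 + exp y)\<^sup>2 / (4 * exp y)"
    unfolding em by (simp add: power2_eq_square field_simps)
  also have "\<dots> \<le> exp (y\<^sup>2 / 4)" by (rule cosh_sq_bound[OF y0])
  also have "\<dots> \<le> exp (p\<^sup>2 * (M / m - 1)\<^sup>2)"
  proof -
    have "y \<le> 2 * p / m * (M - m)" unfolding y_def
      by (rule mult_right_mono[OF sT]) (use mM in simp)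
    also have "\<dots> = 2 * (p * (M / m - 1))" using m0 by (simp add: field_simps)
    finally have "y \<le> 2 * (p * (M / m - 1))" .
    then have "y / 2 \<le> p * (M / m - 1)" by linarith
    then have "(y / 2)\<^sup>2 \<le> (p * (M / m - 1))\<^sup>2" by (rule power_mono) (use y0 in simp)
    then show ?thesis by (simp add: power_mult_distrib power_divide)
  qed
  finally show ?thesis .
qed

theorem lemmaD3:
  fixes pt pg r :: "'x \<Rightarrow> 'y::countable \<Rightarrow> real"
    and \<beta> :: real and x0 :: 'x and n :: nat and phimax phimin :: real
  assumes beta_pos: "\<beta> > 0"
    and pt_pos: "\<And>x y. pt x y > 0" and pt_sum: "\<And>x. ((\<lambda>y. pt x y) has_sum 1) UNIV"
    and pg_pos: "\<And>x y. pg x y > 0" and pg_sum: "\<And>x. ((\<lambda>y. pg x y) has_sum 1) UNIV"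
    and max_bound: "\<And>x y. phi_beta pt pg r \<beta> x y \<le> phimax"
    and max_att: "\<exists>x y. phi_beta pt pg r \<beta> x y = phimax"
    and min_bound: "\<And>x y. phimin \<le> phi_beta pt pg r \<beta> x y"
    and min_att: "\<exists>x y. phi_beta pt pg r \<beta> x y = phimin"
    and n_pos: "n \<ge> 1"
    and p_lo: "0 \<le> ln (real n ^ 4) / real n"
    and p_hi: "ln (real n ^ 4) / real n \<le> 1 / sqrt 2"
  shows "I0 (Phi_beta pg (phi_beta pt pg r \<beta>) x0) n (ln (real n ^ 4) / real n)
           \<le> exp ((ln (real n ^ 4) / real n)^2 * (phimax / phimin - 1)^2)"
proof -
  define p where "p = ln (real n ^ 4) / real n"
  define C where "C = exp (p\<^sup>2 * (phimax / phimin - 1)\<^sup>2)"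
  define Phi where "Phi = Phi_beta pg (phi_beta pt pg r \<beta>) x0"
  define w where "w = (\<lambda>y. pg x0 y)"
  define f where "f = (\<lambda>y. phi_beta pt pg r \<beta> x0 y)"
  define v where "v = (\<lambda>y. w y * f y)"
  define D where "D = (\<lambda>s. \<Sum>\<^sub>\<infinity>y. v y * exp (- s * f y))"
  define T where "T = 2 * p / phimin"
  have p0: "0 \<le> p" and p1: "p \<le> 1 / sqrt 2" using p_lo p_hi by (simp_all add: p_def)
  have phipos: "0 < phi_beta pt pg r \<beta> x y" for x y
    unfolding phi_beta_def using pt_pos[of x y] pg_pos[of x y] by simp
  have m0: "0 < phimin" using min_att phipos by metis
  have fb: "phimin \<le> f y \<and> f y \<le> phimax" for y using min_bound max_bound by (simp add: f_def)
  have f0: "0 \<le> f y" for y using fb[of y] m0 by linarith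
  have fB: "f y \<le> phimax" for y using fb by blast
  have mM: "phimin \<le> phimax" using fb by (meson order_trans)
  have ws: "w summable_on UNIV" using pg_sum[of x0] unfolding w_def summable_on_def by blast
  have W1: "(\<Sum>\<^sub>\<infinity>y. w y) = 1" using pg_sum[of x0] unfolding w_def by (rule infsumI)
  have w0: "0 \<le> w y" for y using pg_pos[of x0 y] by (simp add: w_def)
  have vs: "v summable_on UNIV" unfolding v_def
  proof (rule sum_bdd[OF ws w0, of _ phimax])
    fix y show "\<bar>f y\<bar> \<le> phimax" using f0[of y] fB[of y] by simp
  qed
  have v0: "0 \<le> v y" for y using w0 f0 by (simp add: v_def)
  have Phi_eq: "Phi s = (\<Sum>\<^sub>\<infinity>y. w y * exp (- s * f y))" for s
    by (simp add: Phi_def Phi_beta_def w_def f_def)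
  have Phi_fun: "Phi = (\<lambda>s. \<Sum>\<^sub>\<infinity>y. w y * exp (- s * f y))" using Phi_eq by blast
  have D_alt: "D s = (\<Sum>\<^sub>\<infinity>y. w y * (f y * exp (- s * f y)))" for s
    by (simp add: D_def v_def mult.assoc)
  have dPhi: "(Phi has_real_derivative - D s) (at s)" for s
    unfolding Phi_fun D_alt by (rule Psi_deriv[OF ws w0 f0 fB])
  have derivPhi: "deriv Phi s = - D s" for s by (rule DERIV_imp_deriv[OF dPhi])
  have contD: "continuous_on UNIV D"
  proof -
    have "isCont D s" for s
      unfolding D_def by (rule DERIV_isCont, rule Psi_deriv[OF vs v0 f0 fB])
    then show ?thesis by (simp add: continuous_at_imp_continuous_on)
  qed
  have Phi_b: "exp (- s * phimax) \<le> Phi s \<and> Phi s \<le> exp (- s * phimin)" if "0 \<le> s" for s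
    using infsum_bounds[OF ws w0, of "exp (- s * phimax)" "\<lambda>y. exp (- s * f y)" "exp (- s * phimin)"]
      exp_range[OF that] fb W1 unfolding Phi_eq by auto
  have Phi_pos: "0 < Phi s" if "0 \<le> s" for s
  proof -
    have "0 < exp (- s * phimax)" by simp
    then show ?thesis using Phi_b[OF that] by linarith
  qed
  have Phi0: "Phi 0 = 1" unfolding Phi_eq using W1 by simp
  have D_pos: "0 < D s" if "0 \<le> s" for s
  proof -
    have gb: "phimin * exp (- s * phimax) \<le> f y * exp (- s * f y) \<and> f y * exp (- s * f y) \<le> phimax * exp (- s * phimin)" for y
    proof -
      have r: "exp (- s * phimax) \<le> exp (- s * f y) \<and> exp (- s * f y) \<le> exp (- s * phimin)"
        using exp_range[OF that, of phimin "f y" phimax] fb[of y] by blast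
      show ?thesis using fb[of y] r m0 f0[of y] by (auto intro!: mult_mono)
    qed
    have "phimin * exp (- s * phimax) * (\<Sum>\<^sub>\<infinity>y. w y) \<le> (\<Sum>\<^sub>\<infinity>y. w y * (f y * exp (- s * f y)))"
      using infsum_bounds[where g="\<lambda>y. f y * exp (- s * f y)", OF ws w0 gb] by blast
    then have "phimin * exp (- s * phimax) \<le> D s" unfolding D_alt W1 by simp
    moreover have "0 < phimin * exp (- s * phimax)" using m0 by simp
    ultimately show ?thesis by linarith
  qed
  have D0: "0 \<le> D s" if "0 \<le> s" for s using D_pos[OF that] by simp
  have in_T: "0 \<le> s \<and> s \<le> T" if "0 \<le> s" "1 - p \<le> Phi s" for s
  proof -
    have "exp (- 2 * p) \<le> exp (- s * phimin)"
      using exp_neg2p[OF p0 p1] that(2) Phi_b[OF that(1)] by linarith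
    then have "s * phimin \<le> 2 * p" by simp
    then show ?thesis using that(1) m0 by (simp add: T_def pos_le_divide_eq)
  qed
  have key: "D 0 * D (s1 + s2) \<le> C * D s1 * D s2"
    if s1: "0 \<le> s1" "s1 \<le> T" and s2: "0 \<le> s2" "s2 \<le> T" for s1 s2
  proof -
    have "(\<Sum>\<^sub>\<infinity>y. v y) * (\<Sum>\<^sub>\<infinity>y. v y * exp (- (s1 + s2) * f y))
          \<le> C * (\<Sum>\<^sub>\<infinity>y. v y * exp (- s1 * f y)) * (\<Sum>\<^sub>\<infinity>y. v y * exp (- s2 * f y))"
    proof (rule key_ineq[OF vs v0 m0 fb s1(1) s2(1)])
      show "(exp (- s1 * phimax) + exp (- s1 * phimin))\<^sup>2 / (4 * exp (- s1 * phimax) * exp (- s1 * phimin)) \<le> C"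
        unfolding C_def by (rule K_bound[OF m0 mM s1(1)]) (use s1 in \<open>simp add: T_def\<close>)
      show "(exp (- s2 * phimax) + exp (- s2 * phimin))\<^sup>2 / (4 * exp (- s2 * phimax) * exp (- s2 * phimin)) \<le> C"
        unfolding C_def by (rule K_bound[OF m0 mM s2(1)]) (use s2 in \<open>simp add: T_def\<close>)
      show "0 < (\<Sum>\<^sub>\<infinity>y. v y * exp (- s1 * f y))" using D_pos[OF s1(1)] by (simp add: D_def)
      show "0 < (\<Sum>\<^sub>\<infinity>y. v y * exp (- s2 * f y))" using D_pos[OF s2(1)] by (simp add: D_def)
    qed
    moreover have e0: "D 0 = (\<Sum>\<^sub>\<infinity>y. v y)" by (simp add: D_def)
    ultimately show ?thesis by (simp only: e0 D_def)
  qed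
  have T0: "0 \<le> T" using p0 m0 by (simp add: T_def)
  define H where "H = (\<lambda>z. (real n ^ 2 * Phi (fst z) * Phi (snd z) + real n) * D (fst z) * D (snd z)
                  * exp (real n * (Phi (fst z) * Phi (snd z) - 1)))"
  define Box :: "(real \<times> real) set" where "Box = cbox (0,0) (T,T)"
  have intH: "integrable lborel (\<lambda>z. indicator Box z *\<^sub>R H z)"
    and intH_le: "(\<integral>z. indicator Box z *\<^sub>R H z \<partial>lborel) \<le> 1 - exp (- real n)"
    using integral_bound[OF T0 dPhi contD Phi_pos Phi0 D0, of n] unfolding H_def Box_def by auto
  define Fi where "Fi = (\<lambda>z. (real n ^ 2 * Phi (fst z) * Phi (snd z) + real n) * (- deriv Phi 0)
        * (- deriv Phi (fst z + snd z))
        * exp (real n * (Phi (fst z) * Phi (snd z) - 1)))"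
  have Cpos: "0 < C" by (simp add: C_def)
  have en: "exp (- real n) < 1" using n_pos by simp
  have LINT_le: "(LINT z : R0 Phi p | lborel. Fi z) \<le> C * (1 - exp (- real n))"
  proof (cases "set_integrable lborel (R0 Phi p) Fi")
    case False
    then have "(LINT z : R0 Phi p | lborel. Fi z) = 0"
      by (simp add: set_integrable_def set_lebesgue_integral_def not_integrable_integral_eq)
    then show ?thesis using Cpos en by simp
  next
    case True
    have "(LINT z : R0 Phi p | lborel. Fi z) = (\<integral>z. indicator (R0 Phi p) z *\<^sub>R Fi z \<partial>lborel)"
      by (simp add: set_lebesgue_integral_def)
    also have "\<dots> \<le> (\<integral>z. C * (indicator Box z *\<^sub>R H z) \<partial>lborel)"
    proof (rule integral_mono)
      show "integrable lborel (\<lambda>z. indicator (R0 Phi p) z *\<^sub>R Fi z)"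
        using True by (simp add: set_integrable_def)
      show "integrable lborel (\<lambda>z. C * (indicator Box z *\<^sub>R H z))"
        by (rule integrable_mult_right[OF intH])
      fix z :: "real \<times> real"
      obtain s1 s2 where z: "z = (s1, s2)" by fastforce
      show "indicator (R0 Phi p) z *\<^sub>R Fi z \<le> C * (indicator Box z *\<^sub>R H z)"
      proof (cases "z \<in> R0 Phi p")
        case True
        then have s: "0 \<le> s1" "1 - p \<le> Phi s1" "0 \<le> s2" "1 - p \<le> Phi s2"
          by (auto simp: R0_def z)
        have t1: "0 \<le> s1 \<and> s1 \<le> T" by (rule in_T[OF s(1,2)])
        have t2: "0 \<le> s2 \<and> s2 \<le> T" by (rule in_T[OF s(3,4)])
        have zB: "z \<in> Box" using t1 t2 by (simp add: Box_def z cbox_Pair_eq)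
        define a where "a = (real n ^ 2 * Phi s1 * Phi s2 + real n) * exp (real n * (Phi s1 * Phi s2 - 1))"
        have a0: "0 \<le> a" unfolding a_def using Phi_pos[OF s(1)] Phi_pos[OF s(3)] by simp
        have "Fi z = a * (D 0 * D (s1 + s2))" by (simp add: Fi_def a_def z derivPhi algebra_simps)
        also have "\<dots> \<le> a * (C * D s1 * D s2)"
          by (rule mult_left_mono[OF key a0]) (use t1 t2 in auto)
        also have "\<dots> = C * H z" by (simp add: H_def a_def z algebra_simps)
        finally show ?thesis using True zB by simp
      next
        case False
        have "0 \<le> C * (indicator Box z *\<^sub>R H z)"
        proof (cases "z \<in> Box")
          case True
          then have "0 \<le> s1" "0 \<le> s2" by (auto simp: Box_def z cbox_Pair_eq)
          then have "0 \<le> H z" unfolding H_def z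
            using Phi_pos D0 by (simp add: mult_nonneg_nonneg less_imp_le)
          then show ?thesis using True Cpos by simp
        qed simp
        then show ?thesis using False by simp
      qed
    qed
    also have "\<dots> = C * (\<integral>z. indicator Box z *\<^sub>R H z \<partial>lborel)" by (rule integral_mult_right_zero)
    also have "\<dots> \<le> C * (1 - exp (- real n))" by (rule mult_left_mono[OF intH_le]) (use Cpos in simp)
    finally show ?thesis .
  qed
  have "I0 Phi n p = 1 / (1 - exp (- real n)) * (LINT z : R0 Phi p | lborel. Fi z)"
    by (simp add: I0_def Fi_def)
  also have "\<dots> \<le> 1 / (1 - exp (- real n)) * (C * (1 - exp (- real n)))"
    by (rule mult_left_mono[OF LINT_le]) (use en in simp)
  also have "\<dots> = C" using en by simp
  finally show ?thesis by (simp add: Phi_def p_def C_def)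
qed

end
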